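(* Let $n\ge 4$ and let $G$ be a labeled star graph $K_{1,n-1}$ with vertex set $[n]$ (with any labeling). Then $X(G;\mathbf{x},q)$ is not symmetric.
   Context: A labeled graph is a finite simple graph with vertex set $[n]$. A proper coloring is $c\colon[n]\to\{1,2,\dots\}$ with adjacent vertices colored differently; $\operatorname{asc}(c)=\#\{ij\in E: i<j,\ c(i)<c(j)\}$. The CQF is $X(G;\mathbf{x},q)=\sum_{c \text{ proper}} x_{c(1)}\cdots x_{c(n)}q^{\operatorname{asc}(c)}$; it is symmetric if each coefficient of $q^k$ is a symmetric function. *)

theory Defs
  imports "HOL-Library.FuncSet"
begin

(* A labeled graph on vertex set [n] = {1..n} is given by its edge set E,
   a set of 2-element subsets of {1..n}. Colors are positive integers. *)

definition proper_col :: "nat \<Rightarrow> nat set set \<Rightarrow> (nat \<Rightarrow> nat) \<Rightarrow> bool" where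
  "proper_col n E c \<longleftrightarrow> c \<in> {1..n} \<rightarrow>\<^sub>E {1..} \<and>
     (\<forall>i j. {i, j} \<in> E \<longrightarrow> i \<noteq> j \<longrightarrow> c i \<noteq> c j)"

definition asc :: "nat set set \<Rightarrow> (nat \<Rightarrow> nat) \<Rightarrow> nat" where
  "asc E c = card {(i, j). {i, j} \<in> E \<and> i < j \<and> c i < c j}"

(* coefficient of x^alpha q^k in X(G;x,q), where alpha i is the exponent of x_i (i \<ge> 1) *)
definition cqf_coeff :: "nat \<Rightarrow> nat set set \<Rightarrow> (nat \<Rightarrow> nat) \<Rightarrow> nat \<Rightarrow> nat" where
  "cqf_coeff n E \<alpha> k = card {c. proper_col n E c \<and>
      (\<forall>i\<in>{1..}. card {v\<in>{1..n}. c v = i} = \<alpha> i) \<and> asc E c = k}"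

definition cqf_symmetric :: "nat \<Rightarrow> nat set set \<Rightarrow> bool" where
  "cqf_symmetric n E \<longleftrightarrow> (\<forall>k \<alpha> \<sigma>. bij_betw \<sigma> {1..} {1..} \<longrightarrow>
      cqf_coeff n E \<alpha> k = cqf_coeff n E (\<alpha> \<circ> \<sigma>) k)"

definition star_graph :: "nat \<Rightarrow> nat set set \<Rightarrow> bool" where
  "star_graph n E \<longleftrightarrow> (\<exists>v\<in>{1..n}. E = {{v, w} | w. w \<in> {1..n} \<and> w \<noteq> v})"

end

theory Submission
  imports Defs
begin

lemma edge_iff:
  assumes "E = {{v, w} | w. w \<in> {1..n} \<and> w \<noteq> v}"
  shows "{i,j}\<in>E \<longleftrightarrow> (i=v \<and> j\<in>{1..n} \<and> j\<noteq>v) \<or> (j=v \<and> i\<in>{1..n} \<and> i\<noteq>v)"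
  using assms by (auto simp: doubleton_eq_iff)

lemma asc_star:
  assumes "E = {{v, w} | w. w \<in> {1..n} \<and> w \<noteq> v}"
  shows "asc E c = card {w\<in>{1..n}. w<v \<and> c w < c v} + card {w\<in>{1..n}. v<w \<and> c v < c w}"
proof -
  let ?A = "{w\<in>{1..n}. w<v \<and> c w < c v}" and ?B = "{w\<in>{1..n}. v<w \<and> c v < c w}"
  have "{(i, j). {i, j} \<in> E \<and> i < j \<and> c i < c j} = (\<lambda>w. (w,v)) ` ?A \<union> (\<lambda>w. (v,w)) ` ?B"
    using edge_iff[OF assms] by auto
  moreover have "card ((\<lambda>w. (w,v)) ` ?A \<union> (\<lambda>w. (v,w)) ` ?B) = card ?A + card ?B"
    by (subst card_Un_disjoint) (auto simp: card_image inj_on_def)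
  ultimately show ?thesis unfolding asc_def by simp
qed

lemma center_class:
  assumes "E = {{v, w} | w. w \<in> {1..n} \<and> w \<noteq> v}" "v \<in> {1..n}" "proper_col n E c"
  shows "{w\<in>{1..n}. c w = c v} = {v}"
proof -
  have "\<And>w. w\<in>{1..n} \<Longrightarrow> w \<noteq> v \<Longrightarrow> c w \<noteq> c v"
    using assms(3) edge_iff[OF assms(1)] unfolding proper_col_def by metis
  then show ?thesis using assms(2) by auto
qed

lemma coeff_pos:
  assumes "\<forall>i>3. \<alpha> i = 0" "proper_col n E c" "\<forall>i\<in>{1..}. card {w\<in>{1..n}. c w = i} = \<alpha> i"
    "asc E c = k"
  shows "cqf_coeff n E \<alpha> k > 0"
proof -
  let ?S = "{c. proper_col n E c \<and>
      (\<forall>i\<in>{1..}. card {v\<in>{1..n}. c v = i} = \<alpha> i) \<and> asc E c = k}"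
  have "?S \<subseteq> PiE {1..n} (\<lambda>_. {1..3})"
  proof
    fix d assume d: "d \<in> ?S"
    show "d \<in> PiE {1..n} (\<lambda>_. {1..3})"
    proof (rule PiE_I)
      fix w assume w: "w \<in> {1..n}"
      have d1: "d w \<ge> 1" using d w unfolding proper_col_def by auto
      have "card {u\<in>{1..n}. d u = d w} > 0" using w by (subst card_gt_0_iff) auto
      then have "\<alpha> (d w) > 0" using d d1 by auto
      moreover have "d w \<le> 3"
      proof (rule ccontr)
        assume "\<not> d w \<le> 3"
        then have "\<alpha> (d w) = 0" using assms(1) by simp
        then show False using \<open>\<alpha> (d w) > 0\<close> by simp
      qed
      ultimately show "d w \<in> {1..3}" using d1 by simp
    next
      fix w assume "w \<notin> {1..n}" then show "d w = undefined" using d unfolding proper_col_def by auto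
    qed
  qed
  then have fin: "finite ?S" by (rule finite_subset) (simp add: finite_PiE)
  have "c \<in> ?S" using assms(2,3,4) by blast
  then have "?S \<noteq> {}" by blast
  then have "card ?S > 0" using fin by (intro card_gt_0_iff[THEN iffD2] conjI)
  then show ?thesis unfolding cqf_coeff_def .
qed

theorem proposition5p2:
  fixes n :: nat and E :: "nat set set"
  assumes "n \<ge> 4" and "star_graph n E"
  shows "\<not> cqf_symmetric n E"
proof
  assume sym: "cqf_symmetric n E"
  obtain v where v: "v \<in> {1..n}" and E: "E = {{v, w} | w. w \<in> {1..n} \<and> w \<noteq> v}"
    using assms(2) unfolding star_graph_def by auto
  define \<sigma> :: "nat \<Rightarrow> nat" where "\<sigma> = (\<lambda>i. if i = 1 then 2 else if i = 2 then 1 else i)"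
  have bij: "bij_betw \<sigma> {1..} {1..}"
    unfolding bij_betw_def inj_on_def \<sigma>_def
    by (auto simp: image_def)
  have cardlt: "card {w\<in>{1..n}. w<v} = v - 1"
  proof -
    have "{w\<in>{1..n}. w<v} = {1..<v}" using v by auto
    then show ?thesis by simp
  qed
  have cardgt: "card {w\<in>{1..n}. v<w} = n - v"
  proof -
    have "{w\<in>{1..n}. v<w} = {v<..n}" using v by auto
    then show ?thesis by simp
  qed
  show False
  proof (cases "2*v = n+1")
    case False
    define \<alpha> :: "nat \<Rightarrow> nat" where "\<alpha> = (\<lambda>i. if i = 1 then 1 else if i = 2 then n - 1 else 0)"
    define c where "c = (\<lambda>w. if w \<in> {1..n} then (if w = v then 1 else 2) else (undefined::nat))"
    have pc: "proper_col n E c"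
      unfolding proper_col_def c_def using edge_iff[OF E] v by auto
    have cnt: "\<forall>i\<in>{1..}. card {w\<in>{1..n}. c w = i} = \<alpha> i"
    proof
      fix i :: nat assume "i \<in> {1..}"
      show "card {w\<in>{1..n}. c w = i} = \<alpha> i"
      proof -
        consider "i = 1" | "i = 2" | "i \<noteq> 1 \<and> i \<noteq> 2" by blast
        then show ?thesis
        proof cases
          case 1
          have "{w\<in>{1..n}. c w = i} = {v}" using v 1 by (auto simp: c_def)
          then show ?thesis using 1 by (simp add: \<alpha>_def)
        next
          case 2
          have "{w\<in>{1..n}. c w = i} = {1..n} - {v}" using v 2 by (auto simp: c_def)
          then show ?thesis using 2 v by (simp add: \<alpha>_def)
        next
          case 3
          have "{w\<in>{1..n}. c w = i} = {}" using 3 by (auto simp: c_def)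
          then show ?thesis using 3 by (simp add: \<alpha>_def)
        qed
      qed
    qed
    have "asc E c = card {w\<in>{1..n}. w<v \<and> c w < c v} + card {w\<in>{1..n}. v<w \<and> c v < c w}"
      by (rule asc_star[OF E])
    also have "{w\<in>{1..n}. w<v \<and> c w < c v} = {}" using v by (auto simp: c_def)
    also have "{w\<in>{1..n}. v<w \<and> c v < c w} = {w\<in>{1..n}. v<w}" using v by (auto simp: c_def)
    finally have ac: "asc E c = n - v" using cardgt by simp
    have pos: "cqf_coeff n E \<alpha> (n - v) > 0"
      by (rule coeff_pos[OF _ pc cnt ac]) (simp add: \<alpha>_def)
    have zero: "cqf_coeff n E (\<alpha> \<circ> \<sigma>) (n - v) = 0"
      unfolding cqf_coeff_def
    proof (rule card_eq_0_iff[THEN iffD2], rule disjI1, rule equals0I, elim CollectE conjE)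
      fix d assume pd: "proper_col n E d"
        and cd: "\<forall>i\<in>{1..}. card {w\<in>{1..n}. d w = i} = (\<alpha> \<circ> \<sigma>) i"
        and ad: "asc E d = n - v"
      have cls: "{w\<in>{1..n}. d w = d v} = {v}" by (rule center_class[OF E v pd])
      have dge: "\<And>w. w \<in> {1..n} \<Longrightarrow> d w \<ge> 1" using pd unfolding proper_col_def by auto
      have "(\<alpha> \<circ> \<sigma>) (d v) = 1" using cd[rule_format, of "d v"] cls dge[OF v] by simp
      then have dv: "d v = 2" using assms(1) unfolding \<alpha>_def \<sigma>_def comp_def by (cases "d v = 1"; cases "d v = 2"; simp)
      have leaf: "d w < d v" if w: "w \<in> {1..n}" "w \<noteq> v" for w
      proof -
        have "d w \<noteq> d v" using cls w by auto
        moreover have "card {u\<in>{1..n}. d u = d w} > 0" using w by (subst card_gt_0_iff) auto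
        then have "(\<alpha> \<circ> \<sigma>) (d w) > 0" using cd dge[OF w(1)] by auto
        ultimately show ?thesis using dv dge[OF w(1)] unfolding \<alpha>_def \<sigma>_def comp_def by (cases "d w = 1"; cases "d w = 2"; simp)
      qed
      have "asc E d = card {w\<in>{1..n}. w<v \<and> d w < d v} + card {w\<in>{1..n}. v<w \<and> d v < d w}"
        by (rule asc_star[OF E])
      also have "{w\<in>{1..n}. w<v \<and> d w < d v} = {w\<in>{1..n}. w<v}" using leaf by auto
      also have "{w\<in>{1..n}. v<w \<and> d v < d w} = {}" using leaf by fastforce
      finally have "asc E d = v - 1" using cardlt by simp
      then show False using ad False v by auto
    qed
    show False using sym bij pos zero unfolding cqf_symmetric_def by (metis less_irrefl)
  next
    case True
    define \<alpha> :: "nat \<Rightarrow> nat" where "\<alpha> = (\<lambda>i. if i = 1 then 1 else if i = 2 then n - 2 else if i = 3 then 1 else 0)"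
    define c where "c = (\<lambda>w. if w \<in> {1..n} then (if w = v then 2 else if w = n then 3 else 1) else (undefined::nat))"
    have vn: "v < n" "v \<ge> 1" using True v assms(1) by auto
    have pc: "proper_col n E c"
      unfolding proper_col_def c_def using edge_iff[OF E] v by auto
    have cnt: "\<forall>i\<in>{1..}. card {w\<in>{1..n}. c w = i} = (\<alpha> \<circ> \<sigma>) i"
    proof
      fix i :: nat assume "i \<in> {1..}"
      show "card {w\<in>{1..n}. c w = i} = (\<alpha> \<circ> \<sigma>) i"
      proof -
        consider "i = 1" | "i = 2" | "i = 3" | "i \<noteq> 1 \<and> i \<noteq> 2 \<and> i \<noteq> 3" by blast
        then show ?thesis
        proof cases
          case 1
          have "{w\<in>{1..n}. c w = i} = {1..n} - {v, n}" using v vn 1 by (auto simp: c_def)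
          then show ?thesis using 1 v vn by (simp add: \<alpha>_def \<sigma>_def)
        next
          case 2
          have "{w\<in>{1..n}. c w = i} = {v}" using v vn 2 by (auto simp: c_def)
          then show ?thesis using 2 by (simp add: \<alpha>_def \<sigma>_def)
        next
          case 3
          have "{w\<in>{1..n}. c w = i} = {n}" using v vn 3 by (auto simp: c_def)
          then show ?thesis using 3 by (simp add: \<alpha>_def \<sigma>_def)
        next
          case 4
          have "{w\<in>{1..n}. c w = i} = {}" using 4 by (auto simp: c_def)
          then show ?thesis using 4 by (simp add: \<alpha>_def \<sigma>_def)
        qed
      qed
    qed
    have "asc E c = card {w\<in>{1..n}. w<v \<and> c w < c v} + card {w\<in>{1..n}. v<w \<and> c v < c w}"
      by (rule asc_star[OF E])
    also have "{w\<in>{1..n}. w<v \<and> c w < c v} = {w\<in>{1..n}. w<v}" using v vn by (auto simp: c_def)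
    also have "{w\<in>{1..n}. v<w \<and> c v < c w} = {n}" using v vn by (auto simp: c_def)
    finally have ac: "asc E c = v" using cardlt vn by simp
    have pos: "cqf_coeff n E (\<alpha> \<circ> \<sigma>) v > 0"
      by (rule coeff_pos[OF _ pc cnt ac]) (simp add: \<alpha>_def \<sigma>_def)
    have zero: "cqf_coeff n E \<alpha> v = 0"
      unfolding cqf_coeff_def
    proof (rule card_eq_0_iff[THEN iffD2], rule disjI1, rule equals0I, elim CollectE conjE)
      fix d assume pd: "proper_col n E d"
        and cd: "\<forall>i\<in>{1..}. card {w\<in>{1..n}. d w = i} = \<alpha> i"
        and ad: "asc E d = v"
      have cls: "{w\<in>{1..n}. d w = d v} = {v}" by (rule center_class[OF E v pd])
      have dge: "\<And>w. w \<in> {1..n} \<Longrightarrow> d w \<ge> 1" using pd unfolding proper_col_def by auto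
      have "\<alpha> (d v) = 1" using cd[rule_format, of "d v"] cls dge[OF v] by simp
      then have dv: "d v = 1 \<or> d v = 3" using assms(1) unfolding \<alpha>_def by (cases "d v = 1"; cases "d v = 2"; cases "d v = 3"; simp)
      have leafc: "d w \<noteq> d v \<and> d w \<le> 3" if w: "w \<in> {1..n}" "w \<noteq> v" for w
      proof -
        have "d w \<noteq> d v" using cls w by auto
        moreover have "card {u\<in>{1..n}. d u = d w} > 0" using w by (subst card_gt_0_iff) auto
        then have "\<alpha> (d w) > 0" using cd dge[OF w(1)] by auto
        ultimately show ?thesis unfolding \<alpha>_def by (cases "d w = 1"; cases "d w = 2"; cases "d w = 3"; simp)
      qed
      have asd: "asc E d = card {w\<in>{1..n}. w<v \<and> d w < d v} + card {w\<in>{1..n}. v<w \<and> d v < d w}"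
        by (rule asc_star[OF E])
      from dv show False
      proof
        assume d1: "d v = 1"
        have "{w\<in>{1..n}. w<v \<and> d w < d v} = {}" using d1 dge by fastforce
        moreover have "{w\<in>{1..n}. v<w \<and> d v < d w} = {w\<in>{1..n}. v<w}"
          using d1 dge leafc by fastforce
        ultimately have "asc E d = n - v" using asd cardgt by simp
        then show False using ad True by auto
      next
        assume d3: "d v = 3"
        have "{w\<in>{1..n}. w<v \<and> d w < d v} = {w\<in>{1..n}. w<v}" using d3 leafc by fastforce
        moreover have "{w\<in>{1..n}. v<w \<and> d v < d w} = {}" using d3 leafc by fastforce
        ultimately have "asc E d = v - 1" using asd cardlt by simp
        then show False using ad vn by auto
      qed
    qed
    show False using sym bij pos zero unfolding cqf_symmetric_def by (metis less_irrefl)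
  qed
qed

end
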